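(* In the setting of the context, let $(\sigma_t,\sigma'_t)_{t\ge0}$ be the monotone coupling started at $(\sigma_0,\sigma'_0)$. Then for every $t\ge0$, entrywise, \[ \Big(\mathbb E\,\mathrm{dist}(\sigma_t^{(i)},\sigma_t'^{(i)})\Big)_{i=1}^m\le \mathbf A^t\Big(\mathrm{dist}(\sigma_0^{(i)},\sigma_0'^{(i)})\Big)_{i=1}^m, \] where $\mathbf A=(\mathbf A_{ij})$ is the $m\times m$ matrix with $\mathbf A_{ii}=1-\frac1n+\beta K_{ii}(p_i-\frac1n)$ and $\mathbf A_{ij}=\beta p_iK_{ij}$ for $i\ne j$, with $K_{ij}=k_{ij}/n$.
   Context: Fix $m\ge1$, proportions $p_1,\dots,p_m>0$ with $\sum_ip_i=1$, a symmetric matrix $\mathbf K=(k_{ij})$ with all $k_{ij}>0$, and $\beta\ge0$; $n$ is a positive integer with $np_i\in\mathbb N$. The vertex set $V=\{1,\dots,n\}$ is partitioned into blocks $G_1,\dots,G_m$ with $|G_i|=np_i$; for $v\in G_i,w\in G_j$ put $K(v,w)=K_{ij}=k_{ij}/n$. For $\sigma\in\Omega=\{-1,+1\}^V$ and $v\in V$ let $S^v(\sigma)=\sum_{w\ne v}K(v,w)\sigma(w)$ and $r_+(s)=\frac{1+\tanh(\beta s)}2$. The monotone coupling is the grand coupling of Glauber dynamics in which, at each step, a vertex $I$ uniform on $V$ and an independent $U$ uniform on $[0,1]$ are drawn (shared by all chains), and each chain in state $\sigma$ sets the spin at $I$ to $+1$ if $U\le r_+(S^I(\sigma))$ and to $-1$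 otherwise, leaving other spins unchanged. For configurations $\sigma,\sigma'$, $\mathrm{dist}(\sigma^{(i)},\sigma'^{(i)})=\frac12\sum_{v\in G_i}|\sigma(v)-\sigma'(v)|$ is the number of vertices of $G_i$ where they differ. *)

theory Defs
  imports "HOL-Probability.Probability"
begin

text \<open>Spin configurations: vertices are 0..<n (the paper's 1..n shifted by one);
  spins are real numbers in {-1,1}. Values outside the vertex set are fixed to 1.
  Block membership is given by blk :: nat => nat, vertex v lies in G_(blk v),
  blocks indexed 0..<m.\<close>

type_synonym config = "nat \<Rightarrow> real"

definition Omega :: "nat \<Rightarrow> config set" where
  "Omega n = {\<sigma>. (\<forall>v<n. \<sigma> v = 1 \<or> \<sigma> v = -1) \<and> (\<forall>v\<ge>n. \<sigma> v = 1)}"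

definition Kv :: "nat \<Rightarrow> (nat \<Rightarrow> nat) \<Rightarrow> (nat \<Rightarrow> nat \<Rightarrow> real) \<Rightarrow> nat \<Rightarrow> nat \<Rightarrow> real" where
  "Kv n blk k v w = k (blk v) (blk w) / real n"

definition Sfield :: "nat \<Rightarrow> (nat \<Rightarrow> nat) \<Rightarrow> (nat \<Rightarrow> nat \<Rightarrow> real) \<Rightarrow> nat \<Rightarrow> config \<Rightarrow> real" where
  "Sfield n blk k v \<sigma> = (\<Sum>w\<in>{0..<n} - {v}. Kv n blk k v w * \<sigma> w)"

definition r_plus :: "real \<Rightarrow> real \<Rightarrow> real" where
  "r_plus \<beta> s = (1 + tanh (\<beta> * s)) / 2"

definition glauber_update ::
  "nat \<Rightarrow> (nat \<Rightarrow> nat) \<Rightarrow> (nat \<Rightarrow> nat \<Rightarrow> real) \<Rightarrow> real \<Rightarrow> config \<Rightarrow> nat \<Rightarrow> real \<Rightarrow> config" where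
  "glauber_update n blk k \<beta> \<sigma> I U =
     \<sigma>(I := (if U \<le> r_plus \<beta> (Sfield n blk k I \<sigma>) then 1 else -1))"

definition noise :: "nat \<Rightarrow> (nat \<times> real) measure" where
  "noise n = uniform_count_measure {0..<n} \<Otimes>\<^sub>M uniform_measure lborel {0..1::real}"

definition coupling_step ::
  "nat \<Rightarrow> (nat \<Rightarrow> nat) \<Rightarrow> (nat \<Rightarrow> nat \<Rightarrow> real) \<Rightarrow> real \<Rightarrow> config \<times> config \<Rightarrow> (config \<times> config) measure" where
  "coupling_step n blk k \<beta> x =
     distr (noise n) (count_space UNIV)
       (\<lambda>(I, U). (glauber_update n blk k \<beta> (fst x) I U, glauber_update n blk k \<beta> (snd x) I U))"

primrec coupling_law ::
  "nat \<Rightarrow> (nat \<Rightarrow> nat) \<Rightarrow> (nat \<Rightarrow> nat \<Rightarrow> real) \<Rightarrow> real \<Rightarrow> config \<times> config \<Rightarrow> nat \<Rightarrow> (config \<times> config) measure" where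
  "coupling_law n blk k \<beta> x0 0 = return (count_space UNIV) x0"
| "coupling_law n blk k \<beta> x0 (Suc t) = coupling_law n blk k \<beta> x0 t \<bind> coupling_step n blk k \<beta>"

definition block_dist :: "nat \<Rightarrow> (nat \<Rightarrow> nat) \<Rightarrow> nat \<Rightarrow> config \<Rightarrow> config \<Rightarrow> real" where
  "block_dist n blk i \<sigma> \<sigma>' = (1/2) * (\<Sum>v\<in>{v\<in>{0..<n}. blk v = i}. \<bar>\<sigma> v - \<sigma>' v\<bar>)"

definition Amat :: "nat \<Rightarrow> (nat \<Rightarrow> real) \<Rightarrow> (nat \<Rightarrow> nat \<Rightarrow> real) \<Rightarrow> real \<Rightarrow> nat \<Rightarrow> nat \<Rightarrow> real" where
  "Amat n p k \<beta> i j =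
     (if i = j then 1 - 1 / real n + \<beta> * (k i i / real n) * (p i - 1 / real n)
      else \<beta> * p i * (k i j / real n))"

primrec mat_pow :: "nat \<Rightarrow> (nat \<Rightarrow> nat \<Rightarrow> real) \<Rightarrow> nat \<Rightarrow> nat \<Rightarrow> nat \<Rightarrow> real" where
  "mat_pow m A 0 = (\<lambda>i j. if i = j then 1 else 0)"
| "mat_pow m A (Suc t) = (\<lambda>i j. \<Sum>l<m. A i l * mat_pow m A t l j)"

end

theory Submission
  imports Defs
begin


lemma tanh_lip: "\<bar>tanh (x::real) - tanh y\<bar> \<le> \<bar>x - y\<bar>"
proof -
  have main: "0 \<le> tanh a - tanh b \<and> tanh a - tanh b \<le> a - b" if "b \<le> a" for a b :: real
  proof -
    have "tanh b \<le> tanh a" using tanh_real_strict_mono that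
      by (metis order_le_less strict_mono_less_eq)
    moreover have "(\<lambda>x. tanh x - x) a \<le> (\<lambda>x. tanh x - x) b"
    proof (rule DERIV_nonpos_imp_nonincreasing[OF that])
      fix x :: real assume "b \<le> x" "x \<le> a"
      have "cosh x \<noteq> 0" using cosh_real_pos[of x] by simp
      hence "((\<lambda>x. tanh x - x) has_real_derivative (1 - tanh x ^ 2 - 1)) (at x)"
        by (auto intro!: derivative_eq_intros)
      thus "\<exists>y. ((\<lambda>x. tanh x - x) has_real_derivative y) (at x) \<and> y \<le> 0" by force
    qed
    ultimately show ?thesis by simp
  qed
  show ?thesis
  proof (cases "y \<le> x")
    case True thus ?thesis using main[OF True] by linarith
  next
    case False thus ?thesis using main[of x y] by linarith
  qed
qed

lemma r_lip: "\<beta> \<ge> 0 \<Longrightarrow> \<bar>r_plus \<beta> s - r_plus \<beta> t\<bar> \<le> \<beta> / 2 * \<bar>s - t\<bar>"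
proof -
  assume b: "\<beta> \<ge> 0"
  have "\<bar>r_plus \<beta> s - r_plus \<beta> t\<bar> = abs (tanh (\<beta> * s) - tanh (\<beta> * t)) / 2"
    unfolding r_plus_def by (simp add: abs_if field_simps)
  also have "\<dots> \<le> abs (\<beta> * s - \<beta> * t) / 2" using tanh_lip by (intro divide_right_mono) auto
  also have "\<dots> = \<beta> / 2 * \<bar>s - t\<bar>" using b by (simp add: abs_mult right_diff_distrib[symmetric])
  finally show ?thesis .
qed

lemma S_lip:
  assumes "\<And>w. w \<in> {0..<n} - {I} \<Longrightarrow> Kv n blk k I w \<ge> 0"
  shows "\<bar>Sfield n blk k I \<sigma> - Sfield n blk k I \<sigma>'\<bar> \<le> (\<Sum>w\<in>{0..<n} - {I}. Kv n blk k I w * \<bar>\<sigma> w - \<sigma>' w\<bar>)"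
proof -
  have "Sfield n blk k I \<sigma> - Sfield n blk k I \<sigma>' = (\<Sum>w\<in>{0..<n} - {I}. Kv n blk k I w * (\<sigma> w - \<sigma>' w))"
    unfolding Sfield_def by (simp add: sum_subtractf right_diff_distrib)
  also have "\<bar>\<dots>\<bar> \<le> (\<Sum>w\<in>{0..<n} - {I}. \<bar>Kv n blk k I w * (\<sigma> w - \<sigma>' w)\<bar>)" by (rule sum_abs)
  also have "\<dots> = (\<Sum>w\<in>{0..<n} - {I}. Kv n blk k I w * \<bar>\<sigma> w - \<sigma>' w\<bar>)"
    using assms by (intro sum.cong) (auto simp: abs_mult)
  finally show ?thesis .
qed

lemma bd_update:
  assumes "I < n"
  shows "block_dist n blk i (\<sigma>(I:=u)) (\<sigma>'(I:=u')) = block_dist n blk i \<sigma> \<sigma>'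
     + (if blk I = i then (\<bar>u - u'\<bar> - \<bar>\<sigma> I - \<sigma>' I\<bar>) / 2 else 0)"
proof (cases "blk I = i")
  case True
  let ?G = "{v\<in>{0..<n}. blk v = i}"
  have I: "I \<in> ?G" using True assms by auto
  have fin: "finite ?G" by auto
  have "(\<Sum>v\<in>?G. \<bar>(\<sigma>(I:=u)) v - (\<sigma>'(I:=u')) v\<bar>) = \<bar>u - u'\<bar> + (\<Sum>v\<in>?G - {I}. \<bar>\<sigma> v - \<sigma>' v\<bar>)"
    by (subst sum.remove[OF fin I]) (auto intro!: sum.cong)
  moreover have "(\<Sum>v\<in>?G. \<bar>\<sigma> v - \<sigma>' v\<bar>) = \<bar>\<sigma> I - \<sigma>' I\<bar> + (\<Sum>v\<in>?G - {I}. \<bar>\<sigma> v - \<sigma>' v\<bar>)"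
    by (subst sum.remove[OF fin I]) auto
  ultimately show ?thesis using True unfolding block_dist_def by (simp add: field_simps)
next
  case False
  thus ?thesis unfolding block_dist_def by (auto intro!: sum.cong)
qed



lemma A_split: "Amat n p k \<beta> i j = \<beta> * p i * (k i j / real n)
   + (if j = i then 1 - 1 / real n - \<beta> * (k i i / real n) / real n else 0)"
  unfolding Amat_def by (auto simp: right_diff_distrib)

lemma group_sum:
  fixes n m :: nat and blk :: "nat \<Rightarrow> nat" and f :: "nat \<Rightarrow> real"
  assumes "\<And>v. v < n \<Longrightarrow> blk v < m"
  shows "(\<Sum>w\<in>{0..<n}. f w) = (\<Sum>j<m. \<Sum>w\<in>{v\<in>{0..<n}. blk v = j}. f w)"
  by (rule sum.group[symmetric]) (use assms in auto)

lemma sum_ineq: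
  fixes \<sigma> \<sigma>' :: config
  assumes n: "n \<ge> 1" and i: "i < m"
    and blk: "\<And>v. v < n \<Longrightarrow> blk v < m"
    and card: "real (card {v\<in>{0..<n}. blk v = i}) = real n * p i"
    and R: "\<And>I. I < n \<Longrightarrow> blk I = i \<Longrightarrow>
          R I \<le> \<beta> / 2 * (\<Sum>w\<in>{0..<n} - {I}. Kv n blk k I w * \<bar>\<sigma> w - \<sigma>' w\<bar>)"
  shows "(\<Sum>I\<in>{0..<n}. block_dist n blk i \<sigma> \<sigma>' + (if blk I = i then R I - \<bar>\<sigma> I - \<sigma>' I\<bar> / 2 else 0)) / real n
     \<le> (\<Sum>j<m. Amat n p k \<beta> i j * block_dist n blk j \<sigma> \<sigma>')"
proof -
  define G where "G = {v\<in>{0..<n}. blk v = i}"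
  define D where "D = (\<lambda>w. \<bar>\<sigma> w - \<sigma>' w\<bar>)"
  define d where "d = (\<lambda>j. block_dist n blk j \<sigma> \<sigma>')"
  have d_def': "d j = (\<Sum>w\<in>{v\<in>{0..<n}. blk v = j}. D w) / 2" for j
    unfolding d_def block_dist_def D_def by simp
  have finG: "finite G" unfolding G_def by auto
  have GS: "G \<subseteq> {0..<n}" unfolding G_def by auto
  define T where "T = (\<Sum>w\<in>{0..<n}. k i (blk w) / real n * D w)"
  have T: "T = (\<Sum>j<m. k i j / real n * (2 * d j))"
  proof -
    have "(\<Sum>w\<in>{0..<n}. k i (blk w) / real n * D w) = (\<Sum>j<m. \<Sum>w\<in>{v\<in>{0..<n}. blk v = j}. k i (blk w) / real n * D w)"
      by (rule group_sum[OF blk])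
    also have "\<dots> = (\<Sum>j<m. k i j / real n * (2 * d j))"
    proof (intro sum.cong refl)
    fix j assume "j \<in> {..<m}"
    have "(\<Sum>w\<in>{v \<in> {0..<n}. blk v = j}. k i (blk w) / real n * D w)
       = (\<Sum>w\<in>{v \<in> {0..<n}. blk v = j}. k i j / real n * D w)" by (intro sum.cong) auto
    also have "\<dots> = k i j / real n * (\<Sum>w\<in>{v \<in> {0..<n}. blk v = j}. D w)" by (simp add: sum_distrib_left)
    also have "\<dots> = k i j / real n * (2 * d j)" by (simp add: d_def')
    finally show "(\<Sum>w\<in>{v \<in> {0..<n}. blk v = j}. k i (blk w) / real n * D w) = k i j / real n * (2 * d j)" .
  qed
  finally show ?thesis by (simp only: T_def)
  qed
  have inner: "(\<Sum>w\<in>{0..<n} - {I}. Kv n blk k I w * D w) = T - k i i / real n * D I" if "I \<in> G" for I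
  proof -
    have "I \<in> {0..<n}" "blk I = i" using that G_def by auto
    thus ?thesis unfolding T_def Kv_def
      by (subst sum_diff1) auto
  qed
  have X: "(\<Sum>I\<in>G. \<Sum>w\<in>{0..<n} - {I}. Kv n blk k I w * D w) = real (card G) * T - k i i / real n * (2 * d i)"
  proof -
    have "(\<Sum>I\<in>G. \<Sum>w\<in>{0..<n} - {I}. Kv n blk k I w * D w) = (\<Sum>I\<in>G. T - k i i / real n * D I)"
      by (rule sum.cong[OF refl inner])
    also have "\<dots> = real (card G) * T - k i i / real n * (\<Sum>I\<in>G. D I)"
      by (simp add: sum_subtractf sum_distrib_left)
    also have "(\<Sum>I\<in>G. D I) = 2 * d i" by (simp add: d_def' G_def)
    finally show ?thesis .
  qed
  have lhs: "(\<Sum>I\<in>{0..<n}. d i + (if blk I = i then R I - D I / 2 else 0))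
      = real n * d i + (\<Sum>I\<in>G. R I) - d i"
  proof -
    have "(\<Sum>I\<in>{0..<n}. (if blk I = i then R I - D I / 2 else 0)) = (\<Sum>I\<in>G. R I - D I / 2)"
      unfolding G_def by (rule sym, rule sum.inter_filter) simp
    also have "\<dots> = (\<Sum>I\<in>G. R I) - d i" by (simp add: sum_subtractf d_def' G_def sum_divide_distrib)
    finally show ?thesis by (simp add: sum.distrib)
  qed
  have Rsum: "(\<Sum>I\<in>G. R I) \<le> \<beta> / 2 * (real (card G) * T - k i i / real n * (2 * d i))"
  proof -
    have "(\<Sum>I\<in>G. R I) \<le> (\<Sum>I\<in>G. \<beta> / 2 * (\<Sum>w\<in>{0..<n} - {I}. Kv n blk k I w * D w))"
      using R unfolding D_def G_def by (intro sum_mono) auto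
    also have "\<dots> = \<beta> / 2 * (\<Sum>I\<in>G. \<Sum>w\<in>{0..<n} - {I}. Kv n blk k I w * D w)"
      by (simp only: sum_distrib_left)
    finally show ?thesis unfolding X .
  qed
  have rhs: "(\<Sum>j<m. Amat n p k \<beta> i j * d j) = \<beta> * p i * (\<Sum>j<m. k i j / real n * d j)
      + (1 - 1 / real n - \<beta> * (k i i / real n) / real n) * d i"
  proof -
    have "(\<Sum>j<m. Amat n p k \<beta> i j * d j) = (\<Sum>j<m. \<beta> * p i * (k i j / real n * d j)
        + (if j = i then (1 - 1 / real n - \<beta> * (k i i / real n) / real n) * d i else 0))"
      by (intro sum.cong refl) (simp add: A_split algebra_simps)
    also have "\<dots> = \<beta> * p i * (\<Sum>j<m. k i j / real n * d j)
      + (1 - 1 / real n - \<beta> * (k i i / real n) / real n) * d i"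
      using i by (simp only: sum.distrib sum_distrib_left[symmetric] sum.delta') simp
    finally show ?thesis .
  qed
  have cG: "real (card G) = real n * p i" using card G_def by simp
  have np: "real n > 0" using n by simp
  have "(\<Sum>I\<in>{0..<n}. d i + (if blk I = i then R I - D I / 2 else 0)) / real n
       \<le> (real n * d i + \<beta> / 2 * (real n * p i * T - k i i / real n * (2 * d i)) - d i) / real n"
    unfolding lhs using Rsum cG np by (intro divide_right_mono) auto
  also have "\<dots> = (\<Sum>j<m. Amat n p k \<beta> i j * d j)"
  proof -
    define S where "S = (\<Sum>j<m. k i j / real n * d j)"
    have TS: "T = 2 * S" unfolding T S_def by (simp add: sum_distrib_left mult_ac)
    show ?thesis unfolding rhs TS S_def[symmetric] using np
      by (simp add: field_simps)
  qed
  finally show ?thesis unfolding d_def D_def .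
qed



lemma sets_noise: "sets (noise n) = sets (count_space {0..<n} \<Otimes>\<^sub>M lborel)"
  unfolding noise_def by (intro sets_pair_measure_cong) (auto simp: sets_uniform_count_measure)

lemma meas_g:
  "(\<lambda>(I,U). (glauber_update n blk k \<beta> \<sigma> I U, glauber_update n blk k \<beta> \<sigma>' I U))
     \<in> measurable (noise n) (count_space UNIV)"
proof -
  have "(\<lambda>(I,U). (glauber_update n blk k \<beta> \<sigma> I U, glauber_update n blk k \<beta> \<sigma>' I U))
     \<in> measurable (count_space {0..<n} \<Otimes>\<^sub>M lborel) (count_space UNIV)"
  proof (rule measurable_pair_measure_countable1)
    fix I :: nat
    define a where "a = r_plus \<beta> (Sfield n blk k I \<sigma>)"
    define b where "b = r_plus \<beta> (Sfield n blk k I \<sigma>')"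
    have eq: "(\<lambda>U. case (I, U) of (I, U) \<Rightarrow> (glauber_update n blk k \<beta> \<sigma> I U, glauber_update n blk k \<beta> \<sigma>' I U))
      = (\<lambda>U::real. if U \<le> a then (if U \<le> b then (\<sigma>(I:=1), \<sigma>'(I:=1)) else (\<sigma>(I:=1), \<sigma>'(I:=-1)))
                   else (if U \<le> b then (\<sigma>(I:=-1), \<sigma>'(I:=1)) else (\<sigma>(I:=-1), \<sigma>'(I:=-1))))"
      unfolding glauber_update_def a_def b_def by (auto simp: fun_eq_iff)
    show "(\<lambda>U. case (I, U) of (I, U) \<Rightarrow> (glauber_update n blk k \<beta> \<sigma> I U, glauber_update n blk k \<beta> \<sigma>' I U))
      \<in> measurable lborel (count_space UNIV)"
      unfolding eq by (intro measurable_If measurable_const) auto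
  qed auto
  thus ?thesis by (subst measurable_cong_sets[OF sets_noise refl])
qed

lemma inner_int:
  fixes c e a b :: real
  assumes "c \<ge> 0" "e \<ge> 0"
  shows "(\<integral>\<^sup>+U. ennreal (c + e * indicator {min a b<..max a b} U) \<partial>uniform_measure lborel {0..1::real})
     \<le> ennreal (c + e * \<bar>a - b\<bar>)"
proof -
  let ?M = "uniform_measure lborel {0..1::real}"
  let ?S = "{min a b<..max a b}"
  interpret P: prob_space ?M by (rule prob_space_uniform_measure) auto
  have "(\<integral>\<^sup>+U. ennreal (c + e * indicator ?S U) \<partial>?M) = (\<integral>\<^sup>+U. ennreal c + ennreal e * indicator ?S U \<partial>?M)"
    using assms by (intro nn_integral_cong) (auto split: split_indicator)
  also have "\<dots> = (\<integral>\<^sup>+U. ennreal c \<partial>?M) + (\<integral>\<^sup>+U. ennreal e * indicator ?S U \<partial>?M)"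
    by (rule nn_integral_add) auto
  also have "\<dots> = ennreal c + ennreal e * emeasure ?M ?S"
    by (subst nn_integral_cmult_indicator) (auto simp: P.emeasure_space_1)
  also have "emeasure ?M ?S \<le> ennreal \<bar>a - b\<bar>"
  proof -
    have "emeasure ?M ?S = emeasure lborel ({0..1} \<inter> ?S)" by (simp add: divide_ennreal_def)
    also have "\<dots> \<le> emeasure lborel ?S" by (intro emeasure_mono) auto
    also have "\<dots> = ennreal \<bar>a - b\<bar>" by (simp add: max_def min_def)
    finally show ?thesis .
  qed
  hence "ennreal c + ennreal e * emeasure ?M ?S \<le> ennreal c + ennreal e * ennreal \<bar>a - b\<bar>"
    by (intro add_left_mono mult_left_mono) auto
  also have "\<dots> = ennreal (c + e * \<bar>a - b\<bar>)" using assms by (simp add: ennreal_mult ennreal_plus)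
  finally show ?thesis .
qed



lemma step_bound:
  fixes \<sigma> \<sigma>' :: config
  assumes n: "n \<ge> 1" and i: "i < m"
    and blk: "\<And>v. v < n \<Longrightarrow> blk v < m"
    and kpos: "\<And>i j. i < m \<Longrightarrow> j < m \<Longrightarrow> k i j > 0"
    and b0: "\<beta> \<ge> 0"
    and card: "real (card {v\<in>{0..<n}. blk v = i}) = real n * p i"
  shows "(\<integral>\<^sup>+y. ennreal (block_dist n blk i (fst y) (snd y)) \<partial>coupling_step n blk k \<beta> (\<sigma>, \<sigma>'))
     \<le> ennreal (\<Sum>j<m. Amat n p k \<beta> i j * block_dist n blk j \<sigma> \<sigma>')"
proof -
  define g where "g = (\<lambda>(I,U). (glauber_update n blk k \<beta> \<sigma> I U, glauber_update n blk k \<beta> \<sigma>' I U))"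
  define a where "a I = r_plus \<beta> (Sfield n blk k I \<sigma>)" for I
  define b where "b I = r_plus \<beta> (Sfield n blk k I \<sigma>')" for I
  define S where "S I = {min (a I) (b I)<..max (a I) (b I)}" for I
  define d where "d = block_dist n blk i \<sigma> \<sigma>'"
  define c where "c I = d - (if blk I = i then \<bar>\<sigma> I - \<sigma>' I\<bar> / 2 else 0)" for I
  define e where "e I = (if blk I = i then 1 else 0 :: real)" for I
  define F where "F z = ennreal (block_dist n blk i (fst (g z)) (snd (g z)))" for z
  let ?U = "uniform_measure lborel {0..1::real}"
  interpret U: prob_space ?U by (rule prob_space_uniform_measure) auto
  have gm: "g \<in> measurable (noise n) (count_space UNIV)" unfolding g_def by (rule meas_g)
  have Fm: "F \<in> borel_measurable (uniform_count_measure {0..<n} \<Otimes>\<^sub>M ?U)"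
    unfolding F_def
    by (rule measurable_compose[OF gm[unfolded noise_def]]) simp
  have Fe: "F (I, U) = ennreal (c I + e I * indicator (S I) U)" if "I < n" for I U
  proof -
    have "block_dist n blk i (fst (g (I,U))) (snd (g (I,U))) = c I + e I * indicator (S I) U"
      unfolding g_def glauber_update_def
      by (simp add: bd_update[OF that] c_def e_def d_def S_def a_def b_def split: split_indicator)
         (auto simp: max_def min_def)
    thus ?thesis unfolding F_def by simp
  qed
  have c0: "c I \<ge> 0" if "I < n" for I
  proof (cases "blk I = i")
    case True
    have "\<bar>\<sigma> I - \<sigma>' I\<bar> \<le> (\<Sum>v\<in>{v\<in>{0..<n}. blk v = i}. \<bar>\<sigma> v - \<sigma>' v\<bar>)"
      using that True by (intro member_le_sum) auto
    thus ?thesis unfolding c_def d_def block_dist_def using True by simp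
  next
    case False
    have "d \<ge> 0" unfolding d_def block_dist_def by (simp add: sum_nonneg)
    thus ?thesis unfolding c_def using False by simp
  qed
  have e0: "e I \<ge> 0" for I unfolding e_def by simp
  have "(\<integral>\<^sup>+y. ennreal (block_dist n blk i (fst y) (snd y)) \<partial>coupling_step n blk k \<beta> (\<sigma>, \<sigma>'))
      = (\<integral>\<^sup>+z. F z \<partial>noise n)"
    unfolding coupling_step_def F_def g_def[symmetric] fst_conv snd_conv
    by (subst nn_integral_distr[OF gm]) auto
  also have "\<dots> = (\<integral>\<^sup>+I. \<integral>\<^sup>+U. F (I, U) \<partial>?U \<partial>uniform_count_measure {0..<n})"
    unfolding noise_def by (rule U.nn_integral_fst[symmetric, OF Fm])
  also have "\<dots> = (\<Sum>I\<in>{0..<n}. ennreal (1 / real n) * (\<integral>\<^sup>+U. F (I, U) \<partial>?U))"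
    unfolding uniform_count_measure_def by (subst nn_integral_point_measure_finite) auto
  also have "\<dots> \<le> (\<Sum>I\<in>{0..<n}. ennreal ((c I + e I * \<bar>a I - b I\<bar>) / real n))"
  proof (intro sum_mono)
    fix I assume I: "I \<in> {0..<n}"
    have "(\<integral>\<^sup>+U. F (I, U) \<partial>?U) = (\<integral>\<^sup>+U. ennreal (c I + e I * indicator (S I) U) \<partial>?U)"
      using I by (intro nn_integral_cong) (simp add: Fe)
    also have "\<dots> \<le> ennreal (c I + e I * \<bar>a I - b I\<bar>)"
      unfolding S_def using c0[of I] e0[of I] I by (intro inner_int) auto
    finally have "ennreal (1 / real n) * (\<integral>\<^sup>+U. F (I, U) \<partial>?U) \<le> ennreal (1 / real n) * ennreal (c I + e I * \<bar>a I - b I\<bar>)"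
      by (rule mult_left_mono) simp
    also have "\<dots> = ennreal ((c I + e I * \<bar>a I - b I\<bar>) / real n)"
      using n c0[of I] e0[of I] I
      by (subst ennreal_mult[symmetric]) auto
    finally show "ennreal (1 / real n) * (\<integral>\<^sup>+U. F (I, U) \<partial>?U) \<le> ennreal ((c I + e I * \<bar>a I - b I\<bar>) / real n)" .
  qed
  also have "\<dots> = ennreal (\<Sum>I\<in>{0..<n}. (c I + e I * \<bar>a I - b I\<bar>) / real n)"
    using c0 e0 by (intro sum_ennreal) auto
  also have "\<dots> \<le> ennreal (\<Sum>j<m. Amat n p k \<beta> i j * block_dist n blk j \<sigma> \<sigma>')"
  proof (rule ennreal_leI)
    have R: "\<bar>a I - b I\<bar> \<le> \<beta> / 2 * (\<Sum>w\<in>{0..<n} - {I}. Kv n blk k I w * \<bar>\<sigma> w - \<sigma>' w\<bar>)"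
      if "I < n" "blk I = i" for I
    proof -
      have "\<bar>a I - b I\<bar> \<le> \<beta> / 2 * \<bar>Sfield n blk k I \<sigma> - Sfield n blk k I \<sigma>'\<bar>"
        unfolding a_def b_def by (rule r_lip[OF b0])
      also have "\<dots> \<le> \<beta> / 2 * (\<Sum>w\<in>{0..<n} - {I}. Kv n blk k I w * \<bar>\<sigma> w - \<sigma>' w\<bar>)"
      proof (intro mult_left_mono S_lip)
        fix w assume "w \<in> {0..<n} - {I}"
        thus "Kv n blk k I w \<ge> 0" unfolding Kv_def using that blk kpos[of "blk I" "blk w"]
          by (auto intro!: divide_nonneg_nonneg less_imp_le)
      qed (use b0 in auto)
      finally show ?thesis .
    qed
    have "(\<Sum>I\<in>{0..<n}. (c I + e I * \<bar>a I - b I\<bar>) / real n)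
        = (\<Sum>I\<in>{0..<n}. block_dist n blk i \<sigma> \<sigma>' + (if blk I = i then \<bar>a I - b I\<bar> - \<bar>\<sigma> I - \<sigma>' I\<bar> / 2 else 0)) / real n"
      unfolding sum_divide_distrib c_def e_def d_def by (intro sum.cong) auto
    also have "\<dots> \<le> (\<Sum>j<m. Amat n p k \<beta> i j * block_dist n blk j \<sigma> \<sigma>')"
      by (rule sum_ineq[where p=p and R="\<lambda>I. \<bar>a I - b I\<bar>"]) (use n i blk card R in auto)
    finally show "(\<Sum>I\<in>{0..<n}. (c I + e I * \<bar>a I - b I\<bar>) / real n) \<le> (\<Sum>j<m. Amat n p k \<beta> i j * block_dist n blk j \<sigma> \<sigma>')" .
  qed
  finally show ?thesis .
qed



lemma prob_noise: "n \<ge> 1 \<Longrightarrow> prob_space (noise n)"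
  unfolding noise_def
  by (intro prob_space_pair prob_space_uniform_count_measure prob_space_uniform_measure) auto

lemma step_in_space:
  assumes "n \<ge> 1"
  shows "coupling_step n blk k \<beta> x \<in> space (subprob_algebra (count_space UNIV))"
proof -
  interpret P: prob_space "noise n" by (rule prob_noise[OF assms])
  have "prob_space (coupling_step n blk k \<beta> x)"
    unfolding coupling_step_def by (rule P.prob_space_distr[OF meas_g])
  thus ?thesis unfolding space_subprob_algebra coupling_step_def
    by (auto intro: prob_space_imp_subprob_space)
qed

lemma step_meas:
  assumes "n \<ge> 1"
  shows "coupling_step n blk k \<beta> \<in> measurable (count_space UNIV) (subprob_algebra (count_space UNIV))"
  using step_in_space[OF assms] by simp

lemma sets_law:
  assumes "n \<ge> 1"
  shows "sets (coupling_law n blk k \<beta> x0 t) = sets (count_space UNIV)"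
proof (induction t)
  case 0 thus ?case by simp
next
  case (Suc t)
  have sp: "space (coupling_law n blk k \<beta> x0 t) = UNIV"
    using sets_eq_imp_space_eq[OF Suc] by simp
  show ?case unfolding coupling_law.simps
    by (rule sets_bind) (use step_in_space[OF assms] sp in \<open>auto simp: space_subprob_algebra\<close>)
qed

lemma A_nonneg:
  assumes n: "n \<ge> 1" and i: "i < m" and j: "j < m"
    and p: "real (card {v\<in>{0..<n}. blk v = i}) = real n * p i" "p i > 0"
    and kpos: "\<And>i j. i < m \<Longrightarrow> j < m \<Longrightarrow> k i j > 0" and b0: "\<beta> \<ge> 0"
  shows "Amat n p k \<beta> i j \<ge> 0"
proof (cases "i = j")
  case True
  have "real n * p i > 0" using n p by simp
  hence "card {v\<in>{0..<n}. blk v = i} \<ge> 1" using p(1) by (cases "card {v\<in>{0..<n}. blk v = i}") auto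
  hence "real n * p i \<ge> 1" using p(1) by linarith
  hence "p i - 1 / real n \<ge> 0" using n by (simp add: field_simps)
  moreover have "1 - 1 / real n \<ge> 0" using n by (simp add: field_simps)
  moreover have "\<beta> * (k i i / real n) \<ge> 0" using kpos[OF i i] b0 by simp
  ultimately have "\<beta> * (k i i / real n) * (p i - 1 / real n) \<ge> 0" "1 - 1 / real n \<ge> 0"
    by (simp_all only: mult_nonneg_nonneg)
  thus ?thesis using True unfolding Amat_def by simp
next
  case False
  thus ?thesis unfolding Amat_def using kpos[OF i j] b0 p by simp
qed

lemma mat_pow_nonneg:
  assumes "\<And>i j. i < m \<Longrightarrow> j < m \<Longrightarrow> A i j \<ge> 0"
  shows "i < m \<Longrightarrow> j < m \<Longrightarrow> mat_pow m A t i j \<ge> 0"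
proof (induction t arbitrary: i j)
  case 0 thus ?case by simp
next
  case (Suc t) thus ?case using assms by (auto intro!: sum_nonneg)
qed

lemma bd_nonneg: "block_dist n blk i \<sigma> \<sigma>' \<ge> 0"
  unfolding block_dist_def by (simp add: sum_nonneg)



lemma ennreal_sum_mult:
  assumes "\<And>j. j \<in> J \<Longrightarrow> a j \<ge> (0::real)" "\<And>j. j \<in> J \<Longrightarrow> b j \<ge> 0"
  shows "ennreal (\<Sum>j\<in>J. a j * b j) = (\<Sum>j\<in>J. ennreal (a j) * ennreal (b j))"
proof -
  have "(\<Sum>j\<in>J. ennreal (a j) * ennreal (b j)) = (\<Sum>j\<in>J. ennreal (a j * b j))"
    using assms by (intro sum.cong refl) (simp add: ennreal_mult)
  also have "\<dots> = ennreal (\<Sum>j\<in>J. a j * b j)"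
    using assms by (intro sum_ennreal) simp
  finally show ?thesis by simp
qed

theorem lemma4p2:
  fixes m n :: nat and p :: "nat \<Rightarrow> real" and k :: "nat \<Rightarrow> nat \<Rightarrow> real"
    and \<beta> :: real and blk :: "nat \<Rightarrow> nat" and \<sigma>0 \<sigma>0' :: config and t :: nat
  assumes "m \<ge> 1" and "n \<ge> 1"
    and "\<And>i. i < m \<Longrightarrow> p i > 0" and "(\<Sum>i<m. p i) = 1"
    and "\<And>i j. i < m \<Longrightarrow> j < m \<Longrightarrow> k i j = k j i"
    and "\<And>i j. i < m \<Longrightarrow> j < m \<Longrightarrow> k i j > 0"
    and "\<beta> \<ge> 0"
    and "\<And>v. v < n \<Longrightarrow> blk v < m"
    and "\<And>i. i < m \<Longrightarrow> real (card {v\<in>{0..<n}. blk v = i}) = real n * p i"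
    and "\<sigma>0 \<in> Omega n" and "\<sigma>0' \<in> Omega n"
  shows "\<forall>i<m.
    (\<integral>x. block_dist n blk i (fst x) (snd x) \<partial>coupling_law n blk k \<beta> (\<sigma>0, \<sigma>0') t)
      \<le> (\<Sum>j<m. mat_pow m (Amat n p k \<beta>) t i j * block_dist n blk j \<sigma>0 \<sigma>0')"
proof -
  note n = assms(2) and ppos = assms(3) and kpos = assms(6) and b0 = assms(7)
    and blk = assms(8) and card = assms(9)
  let ?A = "Amat n p k \<beta>"
  let ?L = "coupling_law n blk k \<beta> (\<sigma>0, \<sigma>0')"
  let ?d = "\<lambda>j x. block_dist n blk j (fst x) (snd x)"
  let ?dz = "\<lambda>j. block_dist n blk j \<sigma>0 \<sigma>0'"
  have Anon: "?A i j \<ge> 0" if "i < m" "j < m" for i j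
    by (rule A_nonneg[where p=p and blk=blk and m=m]) (use n that card ppos kpos b0 in auto)
  have Pnon: "mat_pow m ?A s i j \<ge> 0" if "i < m" "j < m" for s i j
    by (rule mat_pow_nonneg[where A="?A" and m=m]) (use Anon that in auto)
  have rhs_non: "(\<Sum>j<m. mat_pow m ?A s i j * ?dz j) \<ge> 0" if "i < m" for s i
    using Pnon that by (intro sum_nonneg mult_nonneg_nonneg bd_nonneg) auto
  have meas: "f \<in> borel_measurable (?L s)" for f :: "config \<times> config \<Rightarrow> ennreal" and s
    by (subst measurable_cong_sets[OF sets_law[OF n] refl]) simp
  have measr: "f \<in> borel_measurable (?L s)" for f :: "config \<times> config \<Rightarrow> real" and s
    by (subst measurable_cong_sets[OF sets_law[OF n] refl]) simp
  have main: "\<forall>i<m. (\<integral>\<^sup>+x. ennreal (?d i x) \<partial>?L s) \<le> ennreal (\<Sum>j<m. mat_pow m ?A s i j * ?dz j)" for s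
  proof (induction s)
    case 0
    show ?case
    proof (intro allI impI)
      fix i assume i: "i < m"
      have "(\<integral>\<^sup>+x. ennreal (?d i x) \<partial>?L 0) = ennreal (?dz i)"
        by (simp add: nn_integral_return)
      also have "?dz i = (\<Sum>j<m. mat_pow m ?A 0 i j * ?dz j)"
        using i by (simp add: if_distrib[of "\<lambda>x. x * _"] sum.delta cong: if_cong)
      finally show "(\<integral>\<^sup>+x. ennreal (?d i x) \<partial>?L 0) \<le> ennreal (\<Sum>j<m. mat_pow m ?A 0 i j * ?dz j)"
        by simp
    qed
  next
    case (Suc s)
    show ?case
    proof (intro allI impI)
      fix i assume i: "i < m"
      have Nm: "coupling_step n blk k \<beta> \<in> measurable (?L s) (subprob_algebra (count_space UNIV))"
        by (subst measurable_cong_sets[OF sets_law[OF n] refl]) (rule step_meas[OF n])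
      have "(\<integral>\<^sup>+x. ennreal (?d i x) \<partial>?L (Suc s))
          = (\<integral>\<^sup>+x. \<integral>\<^sup>+y. ennreal (?d i y) \<partial>coupling_step n blk k \<beta> x \<partial>?L s)"
        unfolding coupling_law.simps by (rule nn_integral_bind[OF _ Nm]) simp
      also have "\<dots> \<le> (\<integral>\<^sup>+x. ennreal (\<Sum>j<m. ?A i j * ?d j x) \<partial>?L s)"
      proof (rule nn_integral_mono)
        fix x :: "config \<times> config"
        obtain \<sigma> \<sigma>' where x: "x = (\<sigma>, \<sigma>')" by (cases x)
        show "(\<integral>\<^sup>+y. ennreal (?d i y) \<partial>coupling_step n blk k \<beta> x) \<le> ennreal (\<Sum>j<m. ?A i j * ?d j x)"
          unfolding x fst_conv snd_conv
          by (rule step_bound[where p=p and m=m]) (use n i blk kpos b0 card in auto)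
      qed
      also have "\<dots> = (\<integral>\<^sup>+x. (\<Sum>j<m. ennreal (?A i j) * ennreal (?d j x)) \<partial>?L s)"
        using Anon[OF i] by (intro nn_integral_cong ennreal_sum_mult) (auto simp: bd_nonneg)
      also have "\<dots> = (\<Sum>j<m. ennreal (?A i j) * (\<integral>\<^sup>+x. ennreal (?d j x) \<partial>?L s))"
        by (subst nn_integral_sum) (auto intro!: meas simp: nn_integral_cmult[OF meas])
      also have "\<dots> \<le> (\<Sum>j<m. ennreal (?A i j) * ennreal (\<Sum>l<m. mat_pow m ?A s j l * ?dz l))"
        using Suc.IH by (intro sum_mono mult_left_mono) auto
      also have "\<dots> = ennreal (\<Sum>j<m. ?A i j * (\<Sum>l<m. mat_pow m ?A s j l * ?dz l))"
        using Anon[OF i] rhs_non by (intro ennreal_sum_mult[symmetric]) auto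
      also have "(\<Sum>j<m. ?A i j * (\<Sum>l<m. mat_pow m ?A s j l * ?dz l)) = (\<Sum>l<m. mat_pow m ?A (Suc s) i l * ?dz l)"
        by (simp add: sum_distrib_left sum_distrib_right mult.assoc) (rule sum.swap)
      finally show "(\<integral>\<^sup>+x. ennreal (?d i x) \<partial>?L (Suc s)) \<le> ennreal (\<Sum>l<m. mat_pow m ?A (Suc s) i l * ?dz l)" .
    qed
  qed
  show ?thesis
  proof (intro allI impI)
    fix i assume i: "i < m"
    have "(\<integral>x. ?d i x \<partial>?L t) = enn2real (\<integral>\<^sup>+x. ennreal (?d i x) \<partial>?L t)"
      by (rule integral_eq_nn_integral[OF measr]) (simp add: bd_nonneg)
    also have "\<dots> \<le> (\<Sum>j<m. mat_pow m ?A t i j * ?dz j)"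
      using main[of t] i rhs_non[OF i] by (intro enn2real_leI) auto
    finally show "(\<integral>x. ?d i x \<partial>?L t) \<le> (\<Sum>j<m. mat_pow m ?A t i j * ?dz j)" .
  qed
qed

end
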